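(* Let $p$ be a prime, $m\ge1$, $q=p^m$, $\omega$ a primitive $q$-th root of unity in $\mathbb C$, and $U_q$ the set of $q$-th roots of unity. Let $k,r\ge0$, and for $t\in[k]$ let $\alpha_t,\alpha_{t,1},\dots,\alpha_{t,r}\in\{0,1,\dots,q-1\}$. Let $\mathcal L'$ be the CSP instance with variables $x_1,\dots,x_k,y_1,\dots,y_r$, all with domain $U_q$, and constraints $x_t=\omega^{\alpha_t}y_1^{\alpha_{t,1}}\cdots y_r^{\alpha_{t,r}}$ for $t\in[k]$. Let $$G'=\{x_t-\omega^{\alpha_t}y_1^{\alpha_{t,1}}\cdots y_r^{\alpha_{t,r}}:t\in[k]\}\cup\{y_j^{q}-1:j\in[r]\}\subseteq\mathbb C[x_1,\dots,x_k,y_1,\dots,y_r].$$ Then $G'$ is a Gröbner basis, with respect to the lexicographic order with $x_1\succ\dots\succ x_k\succ y_1\succ\dots\succ y_r$, of the ideal $\mathtt I(\mathcal L')=\mathbf I(\mathsf{Sol}(\mathcal L'))$; in particular $\langle G'\rangle=\mathbf I(\mathsf{Sol}(\mathcal L'))$.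
   Context: $\mathsf{Sol}(\mathcal L')\subseteq\mathbb C^{k+r}$ is the set of points with all coordinates in $U_q$ satisfying the constraints. $\mathtt I(\mathcal L')$ is the ideal generated by the domain polynomials $z^q-1$ for every variable $z$ and the constraint polynomials; $\mathbf I(S)$ denotes the ideal of all polynomials vanishing on the set $S$. A Gröbner basis of an ideal $I$ for a monomial order is a finite subset $G\subseteq I$ with $\langle\mathrm{LT}(g):g\in G\rangle=\langle\mathrm{LT}(I)\rangle$. Lexicographic order: $x^\alpha\succ x^\beta$ iff the leftmost nonzero entry of $\alpha-\beta$ is positive. *)

theory Defs
  imports Complex_Main "HOL-Library.Poly_Mapping" "HOL-Computational_Algebra.Primes"
begin

text \<open>Multivariate polynomials over the complex numbers in variables indexed by nat:
  a monomial is a finitely supported exponent vector (a poly_mapping from nat to nat), a polynomial is a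
  finitely supported map from monomials to coefficients (convolution product).\<close>

type_synonym mon = "nat \<Rightarrow>\<^sub>0 nat"
type_synonym mpoly = "mon \<Rightarrow>\<^sub>0 complex"

definition Const :: "complex \<Rightarrow> mpoly" where
  "Const c = Poly_Mapping.single 0 c"

definition Var :: "nat \<Rightarrow> mpoly" where
  "Var i = Poly_Mapping.single (Poly_Mapping.single i 1) 1"

definition vars_in :: "nat set \<Rightarrow> mpoly \<Rightarrow> bool" where
  "vars_in V p \<longleftrightarrow> (\<forall>mo\<in>Poly_Mapping.keys p. Poly_Mapping.keys (mo::mon) \<subseteq> V)"

definition poly_eval :: "(nat \<Rightarrow> complex) \<Rightarrow> mpoly \<Rightarrow> complex" where
  "poly_eval a p = (\<Sum>mo\<in>Poly_Mapping.keys p. Poly_Mapping.lookup p mo * (\<Prod>i\<in>Poly_Mapping.keys mo. a i ^ Poly_Mapping.lookup mo i))"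

definition gen_ideal :: "nat set \<Rightarrow> mpoly set \<Rightarrow> mpoly set" where
  "gen_ideal V G = {f. \<exists>F h. finite F \<and> F \<subseteq> G \<and> (\<forall>g\<in>F. vars_in V (h g))
                          \<and> f = (\<Sum>g\<in>F. h g * g)}"

definition vanishing_ideal :: "nat set \<Rightarrow> (nat \<Rightarrow> complex) set \<Rightarrow> mpoly set" where
  "vanishing_ideal V S = {f. vars_in V f \<and> (\<forall>a\<in>S. poly_eval a f = 0)}"

text \<open>Lexicographic order on monomials: a variable with smaller index is more significant,
  i.e. Var 1 \<succ> Var 2 \<succ> ... . lex_gt a b: the leftmost nonzero entry of a - b is positive.\<close>
definition lex_gt :: "mon \<Rightarrow> mon \<Rightarrow> bool" where
  "lex_gt a b \<longleftrightarrow> (\<exists>i. Poly_Mapping.lookup a i > Poly_Mapping.lookup b i \<and> (\<forall>j<i. Poly_Mapping.lookup a j = Poly_Mapping.lookup b j))"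

definition lead_mon :: "mpoly \<Rightarrow> mon" where
  "lead_mon p = (THE mo. mo \<in> Poly_Mapping.keys p \<and> (\<forall>mo'\<in>Poly_Mapping.keys p. mo' \<noteq> mo \<longrightarrow> lex_gt mo mo'))"

definition lead_term :: "mpoly \<Rightarrow> mpoly" where
  "lead_term p = (if p = 0 then 0 else Poly_Mapping.single (lead_mon p) (Poly_Mapping.lookup p (lead_mon p)))"

definition is_groebner_basis :: "nat set \<Rightarrow> mpoly set \<Rightarrow> mpoly set \<Rightarrow> bool" where
  "is_groebner_basis V G I \<longleftrightarrow> finite G \<and> G \<subseteq> I \<and>
     gen_ideal V (lead_term ` G) = gen_ideal V (lead_term ` I)"

text \<open>The CSP instance L': x_t = Var t (t = 1..k), y_j = Var (k + j) (j = 1..r).\<close>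
definition roots_of_unity :: "nat \<Rightarrow> complex set" where
  "roots_of_unity q = {z. z ^ q = 1}"

definition constraint_poly ::
  "complex \<Rightarrow> nat \<Rightarrow> nat \<Rightarrow> (nat \<Rightarrow> nat) \<Rightarrow> (nat \<Rightarrow> nat \<Rightarrow> nat) \<Rightarrow> nat \<Rightarrow> mpoly" where
  "constraint_poly \<omega> k r \<alpha> A t =
     Var t - Const (\<omega> ^ \<alpha> t) * (\<Prod>j\<in>{1..r}. Var (k + j) ^ A t j)"

definition Sol ::
  "nat \<Rightarrow> complex \<Rightarrow> nat \<Rightarrow> nat \<Rightarrow> (nat \<Rightarrow> nat) \<Rightarrow> (nat \<Rightarrow> nat \<Rightarrow> nat) \<Rightarrow> (nat \<Rightarrow> complex) set" where
  "Sol q \<omega> k r \<alpha> A = {a. (\<forall>i\<in>{1..k+r}. a i \<in> roots_of_unity q) \<and> (\<forall>i. i \<notin> {1..k+r} \<longrightarrow> a i = 0)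
      \<and> (\<forall>t\<in>{1..k}. a t = \<omega> ^ \<alpha> t * (\<Prod>j\<in>{1..r}. a (k + j) ^ A t j))}"

definition CSP_ideal ::
  "nat \<Rightarrow> complex \<Rightarrow> nat \<Rightarrow> nat \<Rightarrow> (nat \<Rightarrow> nat) \<Rightarrow> (nat \<Rightarrow> nat \<Rightarrow> nat) \<Rightarrow> mpoly set" where
  "CSP_ideal q \<omega> k r \<alpha> A = gen_ideal {1..k+r}
     ((\<lambda>i. Var i ^ q - 1) ` {1..k+r} \<union> constraint_poly \<omega> k r \<alpha> A ` {1..k})"

definition G' ::
  "nat \<Rightarrow> complex \<Rightarrow> nat \<Rightarrow> nat \<Rightarrow> (nat \<Rightarrow> nat) \<Rightarrow> (nat \<Rightarrow> nat \<Rightarrow> nat) \<Rightarrow> mpoly set" where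
  "G' q \<omega> k r \<alpha> A = constraint_poly \<omega> k r \<alpha> A ` {1..k} \<union> (\<lambda>j. Var (k + j) ^ q - 1) ` {1..r}"

end

theory Submission
  imports Defs "HOL-Library.FuncSet"
begin


abbreviation lk :: "('a \<Rightarrow>\<^sub>0 'b::zero) \<Rightarrow> 'a \<Rightarrow> 'b" where "lk \<equiv> Poly_Mapping.lookup"
abbreviation ks :: "('a \<Rightarrow>\<^sub>0 'b::zero) \<Rightarrow> 'a set" where "ks \<equiv> Poly_Mapping.keys"
abbreviation sg :: "'a \<Rightarrow> 'b \<Rightarrow> ('a \<Rightarrow>\<^sub>0 'b::zero)" where "sg \<equiv> Poly_Mapping.single"

definition mv :: "(nat \<Rightarrow> complex) \<Rightarrow> mon \<Rightarrow> complex" where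
  "mv a M = (\<Prod>i\<in>ks M. a i ^ lk M i)"

lemma mv_superset: "finite S \<Longrightarrow> ks M \<subseteq> S \<Longrightarrow> mv a M = (\<Prod>i\<in>S. a i ^ lk M i)"
  unfolding mv_def by (rule prod.mono_neutral_left) (auto simp: in_keys_iff)

lemma mv_add: "mv a (M + N) = mv a M * mv a N"
proof -
  let ?S = "ks M \<union> ks N"
  have "mv a (M+N) = (\<Prod>i\<in>?S. a i ^ lk (M+N) i)" by (intro mv_superset) (use keys_add[of M N] in auto)
  also have "\<dots> = (\<Prod>i\<in>?S. a i ^ lk M i) * (\<Prod>i\<in>?S. a i ^ lk N i)"
    by (simp add: lookup_add power_add prod.distrib)
  also have "\<dots> = mv a M * mv a N" using mv_superset[of ?S M a] mv_superset[of ?S N a] by simp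
  finally show ?thesis .
qed

lemma mv_zero[simp]: "mv a 0 = 1" by (simp add: mv_def)

lemma mv_single_var[simp]: "mv a (sg i (1::nat)) = a i"
  using mv_superset[of "{i}" "sg i 1" a] by simp

lemma poly_eval_superset: "finite S \<Longrightarrow> ks p \<subseteq> S \<Longrightarrow> poly_eval a p = (\<Sum>M\<in>S. lk p M * mv a M)"
  unfolding poly_eval_def mv_def[symmetric] by (rule sum.mono_neutral_left) (auto simp: in_keys_iff)

lemma eval_add: "poly_eval a (p + q) = poly_eval a p + poly_eval a q"
proof -
  let ?S = "ks p \<union> ks q"
  have "poly_eval a (p+q) = (\<Sum>M\<in>?S. lk (p+q) M * mv a M)" by (intro poly_eval_superset) (use keys_add[of p q] in auto)
  also have "\<dots> = (\<Sum>M\<in>?S. lk p M * mv a M) + (\<Sum>M\<in>?S. lk q M * mv a M)"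
    by (simp add: lookup_add distrib_right sum.distrib)
  also have "\<dots> = poly_eval a p + poly_eval a q" using poly_eval_superset[of ?S p a] poly_eval_superset[of ?S q a] by simp
  finally show ?thesis .
qed

lemma eval_uminus: "poly_eval a (- p) = - poly_eval a p"
  by (simp add: poly_eval_superset[of "ks p"] sum_negf)

lemma eval_diff: "poly_eval a (p - q) = poly_eval a p - poly_eval a q"
  using eval_add[of a p "-q"] eval_uminus[of a q] by simp

lemma eval_zero[simp]: "poly_eval a 0 = 0" by (simp add: poly_eval_def)

lemma eval_single: "poly_eval a (sg M c) = c * mv a M"
  by (simp add: poly_eval_superset[of "{M}"])

lemma eval_sum: "finite F \<Longrightarrow> poly_eval a (\<Sum>x\<in>F. f x) = (\<Sum>x\<in>F. poly_eval a (f x))"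
  by (induction F rule: finite_induct) (auto simp: eval_add)

lemma pm_expand: "p = (\<Sum>M\<in>ks p. sg M (lk p M))"
proof (rule poly_mapping_eqI)
  fix N
  have "lk (\<Sum>M\<in>ks p. sg M (lk p M)) N = (\<Sum>M\<in>ks p. if M = N then lk p M else 0)"
    by (simp add: lookup_sum lookup_single when_def)
  also have "\<dots> = lk p N" by (simp add: sum.delta' in_keys_iff)
  finally show "lk p N = lk (\<Sum>M\<in>ks p. sg M (lk p M)) N" by simp
qed

lemma eval_mult: "poly_eval a (p * q) = poly_eval a p * poly_eval a q"
proof -
  have "p * q = (\<Sum>M\<in>ks p. sg M (lk p M)) * (\<Sum>N\<in>ks q. sg N (lk q N))"
    using pm_expand[of p] pm_expand[of q] by simp
  also have "\<dots> = (\<Sum>M\<in>ks p. \<Sum>N\<in>ks q. sg (M + N) (lk p M * lk q N))"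
    by (simp add: sum_product mult_single)
  finally have "poly_eval a (p*q) = (\<Sum>M\<in>ks p. \<Sum>N\<in>ks q. lk p M * lk q N * mv a (M + N))"
    by (simp add: eval_sum eval_single)
  also have "\<dots> = (\<Sum>M\<in>ks p. lk p M * mv a M) * (\<Sum>N\<in>ks q. lk q N * mv a N)"
    by (simp add: sum_product mv_add mult_ac)
  finally show ?thesis by (simp add: poly_eval_def mv_def)
qed

lemma eval_one[simp]: "poly_eval a 1 = 1"
  using eval_single[of a 0 1] by simp

lemma eval_power: "poly_eval a (p ^ n) = poly_eval a p ^ n"
  by (induction n) (auto simp: eval_mult)

lemma eval_prod: "finite F \<Longrightarrow> poly_eval a (\<Prod>x\<in>F. f x) = (\<Prod>x\<in>F. poly_eval a (f x))"
  by (induction F rule: finite_induct) (auto simp: eval_mult)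

lemma eval_Var[simp]: "poly_eval a (Var i) = a i"
  unfolding Var_def eval_single mv_single_var by simp

lemma eval_Const[simp]: "poly_eval a (Const c) = c"
  by (simp add: Const_def eval_single)

lemma vars_in_add: "vars_in V p \<Longrightarrow> vars_in V q \<Longrightarrow> vars_in V (p + q)"
  unfolding vars_in_def using keys_add[of p q] by (meson UnE subsetD)

lemma vars_in_uminus: "vars_in V p \<Longrightarrow> vars_in V (- p)"
  unfolding vars_in_def by simp

lemma vars_in_diff: "vars_in V p \<Longrightarrow> vars_in V q \<Longrightarrow> vars_in V (p - q)"
  unfolding vars_in_def using keys_diff[of p q] by (meson UnE subsetD)

lemma vars_in_mult: assumes "vars_in V p" "vars_in V q" shows "vars_in V (p * q)"
proof (unfold vars_in_def, intro ballI)
  fix mo assume "mo \<in> ks (p*q)"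
  then obtain a b where ab: "mo = a + b" "a \<in> ks p" "b \<in> ks q" using keys_mult[of p q] by blast
  then have "ks a \<subseteq> V" "ks b \<subseteq> V" using assms unfolding vars_in_def by auto
  then show "ks mo \<subseteq> V" using ab(1) keys_add[of a b] by blast
qed

lemma vars_in_single: "ks M \<subseteq> V \<Longrightarrow> vars_in V (sg M c)"
  unfolding vars_in_def by simp

lemma vars_in_zero[simp]: "vars_in V 0" by (simp add: vars_in_def)
lemma vars_in_one[simp]: "vars_in V 1" by (simp add: vars_in_def)

lemma vars_in_sum: "(\<And>x. x \<in> F \<Longrightarrow> vars_in V (f x)) \<Longrightarrow> vars_in V (\<Sum>x\<in>F. f x)"
proof (induction F rule: infinite_finite_induct)
  case (insert x F)
  then show ?case by (simp add: vars_in_add)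
qed simp_all

lemma gi_intro: "finite F \<Longrightarrow> F \<subseteq> G \<Longrightarrow> (\<forall>g\<in>F. vars_in V (h g)) \<Longrightarrow> f = (\<Sum>g\<in>F. h g * g) \<Longrightarrow> f \<in> gen_ideal V G"
  unfolding gen_ideal_def by (intro CollectI exI[of _ F] exI[of _ h]) simp

lemma gi_zero: "0 \<in> gen_ideal V G"
  unfolding gen_ideal_def by (rule CollectI, rule exI[of _ "{}"]) auto

lemma gi_gen: "g \<in> G \<Longrightarrow> g \<in> gen_ideal V G"
  unfolding gen_ideal_def by (rule CollectI, rule exI[of _ "{g}"], rule exI[of _ "\<lambda>_. 1"]) auto

lemma gi_add: assumes "f1 \<in> gen_ideal V G" "f2 \<in> gen_ideal V G" shows "f1 + f2 \<in> gen_ideal V G"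
proof -
  obtain F1 h1 where 1: "finite F1" "F1 \<subseteq> G" "\<forall>g\<in>F1. vars_in V (h1 g)" "f1 = (\<Sum>g\<in>F1. h1 g * g)"
    using assms(1) unfolding gen_ideal_def by blast
  obtain F2 h2 where 2: "finite F2" "F2 \<subseteq> G" "\<forall>g\<in>F2. vars_in V (h2 g)" "f2 = (\<Sum>g\<in>F2. h2 g * g)"
    using assms(2) unfolding gen_ideal_def by blast
  define h where "h g = (if g \<in> F1 then h1 g else 0) + (if g \<in> F2 then h2 g else 0)" for g
  have e: "h g * g = (if g \<in> F1 then h1 g * g else 0) + (if g \<in> F2 then h2 g * g else 0)" for g
    unfolding h_def by (simp add: distrib_right)
  have "(\<Sum>g\<in>F1 \<union> F2. h g * g) = (\<Sum>g\<in>F1 \<union> F2. (if g \<in> F1 then h1 g * g else 0)) + (\<Sum>g\<in>F1 \<union> F2. (if g \<in> F2 then h2 g * g else 0))"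
    unfolding e by (simp add: sum.distrib)
  also have "\<dots> = f1 + f2"
    using 1 2 by (simp add: sum.If_cases Int_absorb1)
  finally have "f1 + f2 = (\<Sum>g\<in>F1 \<union> F2. h g * g)" by simp
  moreover have "\<forall>g\<in>F1 \<union> F2. vars_in V (h g)" using 1 2 unfolding h_def by (auto intro!: vars_in_add)
  ultimately show ?thesis using 1 2 by (intro gi_intro[of "F1 \<union> F2" _ _ h]) auto
qed

lemma gi_mult: assumes "vars_in V p" "f \<in> gen_ideal V G" shows "p * f \<in> gen_ideal V G"
proof -
  obtain F h where 1: "finite F" "F \<subseteq> G" "\<forall>g\<in>F. vars_in V (h g)" "f = (\<Sum>g\<in>F. h g * g)"
    using assms(2) unfolding gen_ideal_def by blast
  have "p * f = (\<Sum>g\<in>F. (p * h g) * g)" using 1 by (simp add: sum_distrib_left mult.assoc)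
  moreover have "\<forall>g\<in>F. vars_in V (p * h g)" using 1 assms(1) by (auto intro: vars_in_mult)
  ultimately show ?thesis using 1 by (intro gi_intro[of F _ _ "\<lambda>g. p * h g"]) auto
qed

lemma gi_uminus: assumes "f \<in> gen_ideal V G" shows "- f \<in> gen_ideal V G"
proof -
  have "vars_in V (- 1)" by (intro vars_in_uminus) simp
  from gi_mult[OF this assms] show ?thesis by simp
qed

lemma gi_diff: "f1 \<in> gen_ideal V G \<Longrightarrow> f2 \<in> gen_ideal V G \<Longrightarrow> f1 - f2 \<in> gen_ideal V G"
  using gi_add[of f1 V G "- f2"] gi_uminus[of f2 V G] by simp

lemma gi_sum: "(\<And>x. x \<in> F \<Longrightarrow> f x \<in> gen_ideal V G) \<Longrightarrow> (\<Sum>x\<in>F. f x) \<in> gen_ideal V G"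
  by (induction F rule: infinite_finite_induct) (auto intro: gi_add gi_zero)

lemma gi_mono: assumes "G \<subseteq> gen_ideal V H" shows "gen_ideal V G \<subseteq> gen_ideal V H"
proof
  fix f assume "f \<in> gen_ideal V G"
  then obtain F h where 1: "finite F" "F \<subseteq> G" "\<forall>g\<in>F. vars_in V (h g)" "f = (\<Sum>g\<in>F. h g * g)"
    unfolding gen_ideal_def by blast
  show "f \<in> gen_ideal V H" unfolding 1(4) by (intro gi_sum gi_mult) (use 1 assms in auto)
qed

lemma gi_vanish: assumes "\<And>g. g \<in> G \<Longrightarrow> vars_in V g \<and> (\<forall>a\<in>S. poly_eval a g = 0)"
  shows "gen_ideal V G \<subseteq> vanishing_ideal V S"
proof
  fix f assume "f \<in> gen_ideal V G"
  then obtain F h where 1: "finite F" "F \<subseteq> G" "\<forall>g\<in>F. vars_in V (h g)" "f = (\<Sum>g\<in>F. h g * g)"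
    unfolding gen_ideal_def by blast
  have gG: "g \<in> G" if "g \<in> F" for g using 1(2) that by blast
  have "vars_in V f" unfolding 1(4)
  proof (intro vars_in_sum vars_in_mult)
    fix g assume "g \<in> F"
    then show "vars_in V (h g)" using 1(3) by simp
    show "vars_in V g" using assms[OF gG[OF \<open>g \<in> F\<close>]] by simp
  qed
  moreover have "poly_eval a f = 0" if "a \<in> S" for a
  proof -
    have z: "poly_eval a g = 0" if "g \<in> F" for g using assms[OF gG[OF that]] \<open>a \<in> S\<close> by simp
    show ?thesis unfolding 1(4) by (simp add: eval_sum[OF 1(1)] eval_mult z)
  qed
  ultimately show "f \<in> vanishing_ideal V S" unfolding vanishing_ideal_def by blast
qed


lemma Var_pow: "Var i ^ n = sg (sg i n) 1"
proof (induction n)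
  case 0 then show ?case by simp
next
  case (Suc n)
  have "Var i ^ Suc n = Var i * Var i ^ n" by (rule power_Suc)
  also have "\<dots> = sg (sg i 1) 1 * sg (sg i n) 1" unfolding Suc.IH by (simp only: Var_def)
  also have "\<dots> = sg (sg i (1 + n)) 1" by (simp only: mult_single single_add mult_1)
  finally show ?case by simp
qed

lemma prod_sg: "(\<Prod>j\<in>F. sg (f j) (c j :: complex)) = sg (\<Sum>j\<in>F. f j :: mon) (\<Prod>j\<in>F. c j)"
  by (induction F rule: infinite_finite_induct) (simp_all add: mult_single)

lemma lk_ysum: fixes k r i :: nat shows "lk (\<Sum>j\<in>{1..r}. sg (k+j) (f j)) i = (if k < i \<and> i \<le> k+r then f (i-k) else (0::nat))"
proof -
  have "lk (\<Sum>j\<in>{1..r}. sg (k+j) (f j)) i = (\<Sum>j\<in>{1..r}. if k + j = i then f j else 0)"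
    by (simp add: lookup_sum lookup_single when_def)
  also have "\<dots> = (\<Sum>j\<in>{1..r}. if j = i - k then (if k < i then f j else 0) else 0)"
    by (rule sum.cong) auto
  also have "\<dots> = (if k < i \<and> i \<le> k+r then f (i-k) else 0)"
    by (subst sum.delta) auto
  finally show ?thesis .
qed

lemma ks_ysum: fixes k r :: nat shows "ks (\<Sum>j\<in>{1..r}. sg (k+j) (f j) :: mon) \<subseteq> {k+1..k+r}"
proof
  fix i assume "i \<in> ks (\<Sum>j\<in>{1..r}. sg (k+j) (f j) :: mon)"
  then have "lk (\<Sum>j\<in>{1..r}. sg (k+j) (f j) :: mon) i \<noteq> 0" by (simp add: in_keys_iff)
  then show "i \<in> {k+1..k+r}" unfolding lk_ysum by (auto split: if_splits)
qed

locale csp_setup =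
  fixes q k r :: nat and \<omega> :: complex and \<alpha> :: "nat \<Rightarrow> nat" and A :: "nat \<Rightarrow> nat \<Rightarrow> nat"
  assumes q_pos: "q > 0" and om_q: "\<omega> ^ q = 1" and om_prim: "\<forall>n. 0 < n \<and> n < q \<longrightarrow> \<omega> ^ n \<noteq> 1"
begin

definition Yt :: "nat \<Rightarrow> mon" where "Yt t = (\<Sum>j\<in>{1..r}. sg (k+j) (A t j))"
definition EE :: "mon \<Rightarrow> nat \<Rightarrow> nat" where "EE M j = lk M (k+j) + (\<Sum>t\<in>{1..k}. lk M t * A t j)"
definition wexp :: "mon \<Rightarrow> nat" where "wexp M = (\<Sum>t\<in>{1..k}. \<alpha> t * lk M t)"
definition std :: "mon \<Rightarrow> mon" where "std M = (\<Sum>j\<in>{1..r}. sg (k+j) (EE M j mod q))"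
definition Xf :: "mon \<Rightarrow> mon" where "Xf M = (\<Sum>j\<in>{1..r}. sg (k+j) (EE M j))"
definition red :: "mon \<Rightarrow> mon" where "red Z = (\<Sum>j\<in>{1..r}. sg (k+j) (lk Z (k+j) mod q))"

abbreviation "GG \<equiv> G' q \<omega> k r \<alpha> A"
abbreviation "II \<equiv> gen_ideal {1..k+r} GG"

lemma cp_explicit: "constraint_poly \<omega> k r \<alpha> A t = sg (sg t 1) 1 - sg (Yt t) (\<omega> ^ \<alpha> t)"
proof -
  have "(\<Prod>j\<in>{1..r}. Var (k + j) ^ A t j) = sg (Yt t) 1"
    by (simp add: Var_pow prod_sg Yt_def)
  then show ?thesis unfolding constraint_poly_def by (simp add: Var_def Const_def mult_single)
qed

lemma ypoly_explicit: "Var i ^ q - 1 = sg (sg i q) 1 - sg 0 1"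
  by (simp add: Var_pow)

lemma cp_in: "t \<in> {1..k} \<Longrightarrow> constraint_poly \<omega> k r \<alpha> A t \<in> GG"
  unfolding G'_def by (rule UnI1, rule imageI)

lemma yp_in: "j \<in> {1..r} \<Longrightarrow> Var (k+j) ^ q - 1 \<in> GG"
  unfolding G'_def by (rule UnI2, rule image_eqI[OF refl])

lemma Yt_keys: "ks (Yt t) \<subseteq> {k+1..k+r}"
  unfolding Yt_def by (rule ks_ysum)

lemma Yred: "ks Z \<subseteq> {k+1..k+r} \<Longrightarrow> sg Z c - sg (red Z) c \<in> II"
proof (induction "\<Sum>i\<in>{k+1..k+r}. lk Z i" arbitrary: Z rule: less_induct)
  case less
  show ?case
  proof (cases "\<forall>j\<in>{1..r}. lk Z (k+j) < q")
    case True
    have "red Z = Z"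
    proof (rule poly_mapping_eqI)
      fix i
      show "lk (red Z) i = lk Z i"
      proof (cases "k < i \<and> i \<le> k+r")
        case True
        then have "i - k \<in> {1..r}" "k + (i - k) = i" by auto
        then have "lk Z i < q" using \<open>\<forall>j\<in>{1..r}. lk Z (k+j) < q\<close> by metis
        then show ?thesis using True unfolding red_def lk_ysum by simp
      next
        case False
        then have "i \<notin> ks Z" using less.prems by auto
        then show ?thesis using False unfolding red_def lk_ysum by (simp add: in_keys_iff)
      qed
    qed
    then show ?thesis by (simp add: gi_zero)
  next
    case False
    then obtain j where j: "j \<in> {1..r}" "q \<le> lk Z (k+j)" by (auto simp: not_less)
    define Z' where "Z' = Z - sg (k+j) q"
    have LZ: "lk Z i = lk Z' i + (if i = k+j then q else 0)" for i
      using j by (auto simp: Z'_def lookup_minus lookup_single when_def)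
    have ZZ: "Z = Z' + sg (k+j) q"
      by (rule poly_mapping_eqI) (simp add: lookup_add lookup_single when_def LZ)
    have ks': "ks Z' \<subseteq> {k+1..k+r}"
    proof
      fix i assume "i \<in> ks Z'"
      then have "i \<in> ks Z" using LZ[of i] by (simp add: in_keys_iff)
      then show "i \<in> {k+1..k+r}" using less.prems by auto
    qed
    have "(\<Sum>i\<in>{k+1..k+r}. lk Z i) = (\<Sum>i\<in>{k+1..k+r}. lk Z' i) + (\<Sum>i\<in>{k+1..k+r}. if i = k+j then q else 0)"
      by (simp add: LZ sum.distrib)
    also have "(\<Sum>i\<in>{k+1..k+r}. if i = k+j then q else 0) = q"
      using j by (subst sum.delta) auto
    finally have lt: "(\<Sum>i\<in>{k+1..k+r}. lk Z' i) < (\<Sum>i\<in>{k+1..k+r}. lk Z i)" using q_pos by simp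
    have IH: "sg Z' c - sg (red Z') c \<in> II" using less.hyps[OF lt ks'] .
    have rr: "red Z' = red Z" unfolding red_def
      by (rule sum.cong) (auto simp: LZ)
    have diff: "sg Z c - sg Z' c = sg Z' c * (Var (k+j) ^ q - 1)"
      by (simp add: Var_pow right_diff_distrib mult_single flip: ZZ)
    have "vars_in {1..k+r} (sg Z' c)" using ks' by (intro vars_in_single) auto
    then have "sg Z c - sg Z' c \<in> II" unfolding diff
      by (rule gi_mult) (rule gi_gen[OF yp_in[OF j(1)]])
    from gi_add[OF this IH] show ?thesis using rr by simp
  qed
qed

end


context csp_setup
begin

lemma lk_Yt: "lk (Yt t) i = (if k < i \<and> i \<le> k+r then A t (i-k) else 0)"
  unfolding Yt_def by (rule lk_ysum)

lemma Xred: "ks M \<subseteq> {1..k+r} \<Longrightarrow> sg M c - sg (Xf M) (c * \<omega> ^ wexp M) \<in> II"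
proof (induction "\<Sum>t\<in>{1..k}. lk M t" arbitrary: M c rule: less_induct)
  case less
  show ?case
  proof (cases "\<forall>t\<in>{1..k}. lk M t = 0")
    case True
    have "Xf M = M"
    proof (rule poly_mapping_eqI)
      fix i
      show "lk (Xf M) i = lk M i"
      proof (cases "k < i \<and> i \<le> k+r")
        case True
        then have "k + (i - k) = i" by auto
        then show ?thesis using True \<open>\<forall>t\<in>{1..k}. lk M t = 0\<close> unfolding Xf_def lk_ysum EE_def by simp
      next
        case False
        have "lk M i = 0"
        proof (cases "i \<in> {1..k}")
          case True then show ?thesis using \<open>\<forall>t\<in>{1..k}. lk M t = 0\<close> by simp
        next
          case F2: False
          then have "i \<notin> ks M" using less.prems False by auto
          then show ?thesis by (simp add: in_keys_iff)
        qed
        moreover have "lk (Xf M) i = 0" unfolding Xf_def lk_ysum using False by auto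
        ultimately show ?thesis by simp
      qed
    qed
    moreover have "wexp M = 0" unfolding wexp_def using True by simp
    ultimately show ?thesis by (simp add: gi_zero)
  next
    case False
    then obtain t where t: "t \<in> {1..k}" "lk M t \<noteq> 0" by auto
    define M' where "M' = M - sg t 1"
    have LM: "lk M i = lk M' i + (if i = t then 1 else 0)" for i
      using t by (auto simp: M'_def lookup_minus lookup_single when_def)
    have MM: "M = M' + sg t 1"
      by (rule poly_mapping_eqI) (simp add: lookup_add lookup_single when_def LM)
    define M'' where "M'' = M' + Yt t"
    have LM'': "lk M'' i = lk M' i + (if k < i \<and> i \<le> k+r then A t (i-k) else 0)" for i
      by (simp add: M''_def lookup_add lk_Yt)
    have ks'': "ks M'' \<subseteq> {1..k+r}"
    proof
      fix i assume "i \<in> ks M''"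
      then have "lk M' i \<noteq> 0 \<or> (k < i \<and> i \<le> k+r)" using LM''[of i] by (auto simp: in_keys_iff split: if_splits)
      then have "i \<in> ks M \<or> (k < i \<and> i \<le> k+r)" using LM[of i] by (auto simp: in_keys_iff)
      then show "i \<in> {1..k+r}" using less.prems by auto
    qed
    have x1: "(\<Sum>t'\<in>{1..k}. lk M'' t') = (\<Sum>t'\<in>{1..k}. lk M' t')"
      by (rule sum.cong) (auto simp: LM'')
    have x2: "(\<Sum>t'\<in>{1..k}. lk M t') = (\<Sum>t'\<in>{1..k}. lk M' t') + 1"
    proof -
      have "(\<Sum>t'\<in>{1..k}. lk M t') = (\<Sum>t'\<in>{1..k}. lk M' t') + (\<Sum>t'\<in>{1..k}. if t' = t then 1 else 0)"
        by (simp add: LM sum.distrib)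
      also have "(\<Sum>t'\<in>{1..k}. if t' = t then 1 else (0::nat)) = 1" using t(1) by (subst sum.delta) auto
      finally show ?thesis .
    qed
    have lt: "(\<Sum>t'\<in>{1..k}. lk M'' t') < (\<Sum>t'\<in>{1..k}. lk M t')" using x1 x2 by simp
    have IH: "sg M'' (c * \<omega> ^ \<alpha> t) - sg (Xf M'') (c * \<omega> ^ \<alpha> t * \<omega> ^ wexp M'') \<in> II"
      using less.hyps[OF lt ks''] .
    have EEeq: "EE M'' j = EE M j" if "j \<in> {1..r}" for j
    proof -
      have s1: "(\<Sum>t'\<in>{1..k}. lk M'' t' * A t' j) = (\<Sum>t'\<in>{1..k}. lk M' t' * A t' j)"
        by (rule sum.cong) (auto simp: LM'')
      have "(\<Sum>t'\<in>{1..k}. lk M t' * A t' j) = (\<Sum>t'\<in>{1..k}. lk M' t' * A t' j) + (\<Sum>t'\<in>{1..k}. if t' = t then A t' j else 0)"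
      proof -
        have "lk M t' * A t' j = lk M' t' * A t' j + (if t' = t then A t' j else 0)" for t'
          by (simp add: LM)
        then show ?thesis by (simp add: sum.distrib)
      qed
      also have "(\<Sum>t'\<in>{1..k}. if t' = t then A t' j else 0) = A t j" using t(1) by (subst sum.delta) auto
      finally have s2: "(\<Sum>t'\<in>{1..k}. lk M t' * A t' j) = (\<Sum>t'\<in>{1..k}. lk M' t' * A t' j) + A t j" .
      have "lk M'' (k+j) = lk M' (k+j) + A t j" using that by (simp add: LM'')
      moreover have "lk M (k+j) = lk M' (k+j)" using LM[of "k+j"] t(1) that by auto
      ultimately show ?thesis unfolding EE_def s1 s2 by simp
    qed
    have Xeq: "Xf M'' = Xf M" unfolding Xf_def by (rule sum.cong) (auto simp: EEeq)
    have w1: "wexp M'' = wexp M'" unfolding wexp_def by (rule sum.cong) (auto simp: LM'')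
    have w2: "wexp M = wexp M' + \<alpha> t"
    proof -
      have "wexp M = (\<Sum>t'\<in>{1..k}. \<alpha> t' * lk M' t') + (\<Sum>t'\<in>{1..k}. if t' = t then \<alpha> t' else 0)"
      proof -
        have "\<alpha> t' * lk M t' = \<alpha> t' * lk M' t' + (if t' = t then \<alpha> t' else 0)" for t'
          by (simp add: LM)
        then show ?thesis unfolding wexp_def by (simp add: sum.distrib)
      qed
      also have "(\<Sum>t'\<in>{1..k}. if t' = t then \<alpha> t' else 0) = \<alpha> t" using t(1) by (subst sum.delta) auto
      finally show ?thesis unfolding wexp_def .
    qed
    have ceq: "c * \<omega> ^ \<alpha> t * \<omega> ^ wexp M'' = c * \<omega> ^ wexp M"
      unfolding w1 w2 by (simp add: power_add mult_ac)
    have diff: "sg M c - sg M'' (c * \<omega> ^ \<alpha> t) = sg M' c * constraint_poly \<omega> k r \<alpha> A t"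
      unfolding cp_explicit by (simp add: right_diff_distrib mult_single M''_def) (metis MM One_nat_def)
    have "vars_in {1..k+r} (sg M' c)"
    proof (intro vars_in_single subsetI)
      fix i assume "i \<in> ks M'"
      then have "i \<in> ks M" using LM[of i] by (auto simp: in_keys_iff)
      then show "i \<in> {1..k+r}" using less.prems by auto
    qed
    then have "sg M c - sg M'' (c * \<omega> ^ \<alpha> t) \<in> II" unfolding diff
      by (rule gi_mult) (rule gi_gen[OF cp_in[OF t(1)]])
    from gi_add[OF this IH] show ?thesis using Xeq ceq by simp
  qed
qed

lemma std_red: assumes "ks M \<subseteq> {1..k+r}" shows "sg M c - sg (std M) (c * \<omega> ^ wexp M) \<in> II"
proof -
  have a: "sg M c - sg (Xf M) (c * \<omega> ^ wexp M) \<in> II" using Xred[OF assms] .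
  have b: "sg (Xf M) (c * \<omega> ^ wexp M) - sg (red (Xf M)) (c * \<omega> ^ wexp M) \<in> II"
    by (rule Yred) (unfold Xf_def, rule ks_ysum)
  have "red (Xf M) = std M" unfolding red_def std_def Xf_def lk_ysum
    by (rule sum.cong) auto
  with gi_add[OF a b] show ?thesis by simp
qed

definition NF :: "mpoly \<Rightarrow> mpoly" where
  "NF f = (\<Sum>M\<in>ks f. sg (std M) (lk f M * \<omega> ^ wexp M))"

lemma main_red: assumes "vars_in {1..k+r} f" shows "f - NF f \<in> II"
proof -
  have "f - NF f = (\<Sum>M\<in>ks f. sg M (lk f M) - sg (std M) (lk f M * \<omega> ^ wexp M))"
    unfolding NF_def sum_subtractf by (subst pm_expand[of f]) simp
  also have "\<dots> \<in> II"
    by (rule gi_sum, rule std_red) (use assms in \<open>auto simp: vars_in_def\<close>)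
  finally show ?thesis .
qed

end


lemma dvd_shift: fixes x d q :: nat assumes "d < q" shows "(q dvd x + (q - d)) = (x mod q = d)"
proof -
  define b where "b = x mod q"
  have bq: "b < q" using assms unfolding b_def by simp
  have "(q dvd x + (q - d)) = (q dvd b + (q - d))" unfolding b_def
    by (metis mod_add_left_eq dvd_eq_mod_eq_0)
  also have "\<dots> = (b = d)"
  proof (cases "b = d")
    case True then show ?thesis using assms by simp
  next
    case False
    show ?thesis
    proof (cases "b < d")
      case True
      then have "0 < b + (q - d)" "b + (q - d) < q" using assms by auto
      then show ?thesis using False nat_dvd_not_less by blast
    next
      case F2: False
      then have e: "b + (q - d) = q + (b - d)" and p: "0 < b - d" "b - d < q" using assms False bq by auto
      have "(q dvd b + (q - d)) = (q dvd b - d)" unfolding e by (rule dvd_add_right_iff[OF dvd_refl])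
      then show ?thesis using False p nat_dvd_not_less by blast
    qed
  qed
  finally show ?thesis unfolding b_def .
qed

lemma prod_if_const: assumes "finite J"
  shows "(\<Prod>j\<in>J. if P j then c else (0::complex)) = (if \<forall>j\<in>J. P j then c ^ card J else 0)"
proof (cases "\<forall>j\<in>J. P j")
  case True
  then have "(\<Prod>j\<in>J. if P j then c else (0::complex)) = (\<Prod>j\<in>J. c)" by (intro prod.cong) auto
  then show ?thesis using True by simp
next
  case False
  then show ?thesis using assms by (auto intro!: prod_zero)
qed

context csp_setup
begin

definition ptexp :: "(nat \<Rightarrow> nat) \<Rightarrow> nat \<Rightarrow> nat" where
  "ptexp s i = (if i \<in> {1..k} then \<alpha> i + (\<Sum>j\<in>{1..r}. s j * A i j) else s (i - k))"
definition pt :: "(nat \<Rightarrow> nat) \<Rightarrow> nat \<Rightarrow> complex" where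
  "pt s i = (if i \<in> {1..k+r} then \<omega> ^ ptexp s i else 0)"

lemma om_pow_q: "(\<omega> ^ n) ^ q = 1"
proof -
  have "(\<omega> ^ n) ^ q = (\<omega> ^ q) ^ n" by (simp add: power_mult[symmetric] mult.commute)
  then show ?thesis by (simp add: om_q)
qed

lemma om_pow_mod: "\<omega> ^ n = \<omega> ^ (n mod q)"
proof -
  have "\<omega> ^ n = \<omega> ^ (q * (n div q) + n mod q)" by simp
  also have "\<dots> = (\<omega> ^ q) ^ (n div q) * \<omega> ^ (n mod q)" by (simp only: power_add power_mult)
  finally show ?thesis by (simp add: om_q)
qed

lemma pt_Sol: "pt s \<in> Sol q \<omega> k r \<alpha> A"
proof -
  have 1: "\<forall>i\<in>{1..k+r}. pt s i \<in> roots_of_unity q"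
    by (auto simp: pt_def roots_of_unity_def om_pow_q)
  have 2: "\<forall>i. i \<notin> {1..k+r} \<longrightarrow> pt s i = 0" by (simp add: pt_def)
  have 3: "pt s t = \<omega> ^ \<alpha> t * (\<Prod>j\<in>{1..r}. pt s (k + j) ^ A t j)" if t: "t \<in> {1..k}" for t
  proof -
    have "pt s (k + j) = \<omega> ^ s j" if "j \<in> {1..r}" for j using that by (simp add: pt_def ptexp_def)
    then have "(\<Prod>j\<in>{1..r}. pt s (k + j) ^ A t j) = (\<Prod>j\<in>{1..r}. \<omega> ^ (s j * A t j))"
      by (intro prod.cong) (auto simp: power_mult)
    moreover have "pt s t = \<omega> ^ (\<alpha> t + (\<Sum>j\<in>{1..r}. s j * A t j))" using t by (simp add: pt_def ptexp_def)
    ultimately show ?thesis by (simp add: power_add power_sum)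
  qed
  show ?thesis unfolding Sol_def using 1 2 3 by blast
qed

lemma exp_identity: "(\<Sum>i\<in>{1..k+r}. ptexp s i * lk M i) = wexp M + (\<Sum>j\<in>{1..r}. s j * EE M j)"
proof -
  have split: "{1..k+r} = {1..k} \<union> {k+1..k+r}" by auto
  have "(\<Sum>i\<in>{1..k+r}. ptexp s i * lk M i) = (\<Sum>i\<in>{1..k}. ptexp s i * lk M i) + (\<Sum>i\<in>{k+1..k+r}. ptexp s i * lk M i)"
    unfolding split by (rule sum.union_disjoint) auto
  also have "(\<Sum>i\<in>{1..k}. ptexp s i * lk M i) = (\<Sum>t\<in>{1..k}. \<alpha> t * lk M t + (\<Sum>j\<in>{1..r}. s j * A t j * lk M t))"
    by (rule sum.cong) (auto simp: ptexp_def distrib_right sum_distrib_right)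
  also have "\<dots> = wexp M + (\<Sum>t\<in>{1..k}. \<Sum>j\<in>{1..r}. s j * A t j * lk M t)"
    by (simp add: sum.distrib wexp_def)
  also have "(\<Sum>i\<in>{k+1..k+r}. ptexp s i * lk M i) = (\<Sum>j\<in>{1..r}. s j * lk M (k + j))"
  proof -
    have "(\<Sum>i\<in>{k+1..k+r}. ptexp s i * lk M i) = (\<Sum>i\<in>{1+k..r+k}. ptexp s i * lk M i)" by (simp add: add.commute)
    also have "\<dots> = (\<Sum>j\<in>{1..r}. ptexp s (j + k) * lk M (j + k))" by (rule sum.shift_bounds_cl_nat_ivl)
    also have "\<dots> = (\<Sum>j\<in>{1..r}. s j * lk M (k + j))"
      by (rule sum.cong) (auto simp: ptexp_def add.commute)
    finally show ?thesis .
  qed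
  also have "(\<Sum>j\<in>{1..r}. s j * EE M j) = (\<Sum>j\<in>{1..r}. s j * lk M (k + j)) + (\<Sum>j\<in>{1..r}. \<Sum>t\<in>{1..k}. s j * A t j * lk M t)"
    unfolding EE_def by (simp add: distrib_left sum.distrib sum_distrib_left mult_ac)
  moreover have "(\<Sum>j\<in>{1..r}. \<Sum>t\<in>{1..k}. s j * A t j * lk M t) = (\<Sum>t\<in>{1..k}. \<Sum>j\<in>{1..r}. s j * A t j * lk M t)"
    by (rule sum.swap)
  ultimately show ?thesis by simp
qed

lemma mv_pt: assumes "ks M \<subseteq> {1..k+r}" shows "mv (pt s) M = \<omega> ^ (wexp M + (\<Sum>j\<in>{1..r}. s j * EE M j))"
proof -
  have "mv (pt s) M = (\<Prod>i\<in>{1..k+r}. pt s i ^ lk M i)" using assms by (intro mv_superset) auto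
  also have "\<dots> = (\<Prod>i\<in>{1..k+r}. \<omega> ^ (ptexp s i * lk M i))"
    by (rule prod.cong) (auto simp: pt_def power_mult)
  also have "\<dots> = \<omega> ^ (\<Sum>i\<in>{1..k+r}. ptexp s i * lk M i)" by (simp add: power_sum)
  also have "\<dots> = \<omega> ^ (wexp M + (\<Sum>j\<in>{1..r}. s j * EE M j))" by (simp only: exp_identity)
  finally show ?thesis .
qed

lemma eval_pt: assumes "vars_in {1..k+r} f"
  shows "poly_eval (pt s) f = (\<Sum>M\<in>ks f. lk f M * \<omega> ^ (wexp M + (\<Sum>j\<in>{1..r}. s j * EE M j)))"
  unfolding poly_eval_def mv_def[symmetric]
  by (rule sum.cong) (use assms in \<open>auto simp: vars_in_def mv_pt\<close>)

lemma geom: "(\<Sum>b<q. \<omega> ^ (b * D)) = (if q dvd D then of_nat q else 0)"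
proof (cases "q dvd D")
  case True
  then obtain m where D: "D = q * m" by auto
  have "\<omega> ^ (b * D) = 1" for b
  proof -
    have "\<omega> ^ (b * D) = (\<omega> ^ q) ^ (m * b)" unfolding D by (simp add: power_mult[symmetric] mult_ac)
    then show ?thesis by (simp add: om_q)
  qed
  then show ?thesis using True by simp
next
  case False
  define z where "z = \<omega> ^ D"
  have "\<omega> ^ D = \<omega> ^ (D mod q)" by (rule om_pow_mod)
  moreover have "0 < D mod q" "D mod q < q" using False q_pos by (auto simp: dvd_eq_mod_eq_0)
  ultimately have z1: "z \<noteq> 1" using om_prim unfolding z_def by metis
  have zq: "z ^ q = 1" unfolding z_def by (rule om_pow_q)
  have "(\<Sum>b<q. \<omega> ^ (b * D)) = (\<Sum>b<q. z ^ b)" unfolding z_def by (simp add: power_mult[symmetric] mult.commute)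
  also have "\<dots> = 0" using z1 zq by (simp add: sum_gp_strict)
  finally show ?thesis using False by simp
qed

lemma fourier:
  assumes vf: "vars_in {1..k+r} f" and van: "\<forall>a\<in>Sol q \<omega> k r \<alpha> A. poly_eval a f = 0" and d: "\<forall>j\<in>{1..r}. d j < q"
  shows "(\<Sum>M\<in>ks f. if (\<forall>j\<in>{1..r}. EE M j mod q = d j) then lk f M * \<omega> ^ wexp M else 0) = 0"
proof -
  let ?S = "PiE {1..r} (\<lambda>_. {..<q})"
  let ?X = "\<lambda>M j. EE M j + (q - d j)"
  let ?P = "\<lambda>M. \<forall>j\<in>{1..r}. EE M j mod q = d j"
  have "0 = (\<Sum>s\<in>?S. poly_eval (pt s) f * \<omega> ^ (\<Sum>j\<in>{1..r}. s j * (q - d j)))"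
    using van pt_Sol by simp
  also have "\<dots> = (\<Sum>s\<in>?S. \<Sum>M\<in>ks f. lk f M * \<omega> ^ wexp M * (\<Prod>j\<in>{1..r}. \<omega> ^ (s j * ?X M j)))"
  proof (rule sum.cong[OF refl])
    fix s
    have e: "lk f M * \<omega> ^ (wexp M + (\<Sum>j\<in>{1..r}. s j * EE M j)) * \<omega> ^ (\<Sum>j\<in>{1..r}. s j * (q - d j))
       = lk f M * \<omega> ^ wexp M * (\<Prod>j\<in>{1..r}. \<omega> ^ (s j * ?X M j))" for M
    proof -
      have "(\<Prod>j\<in>{1..r}. \<omega> ^ (s j * ?X M j)) = \<omega> ^ (\<Sum>j\<in>{1..r}. s j * ?X M j)" by (simp only: power_sum)
      also have "(\<Sum>j\<in>{1..r}. s j * ?X M j) = (\<Sum>j\<in>{1..r}. s j * EE M j) + (\<Sum>j\<in>{1..r}. s j * (q - d j))"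
        by (simp only: distrib_left sum.distrib)
      finally show ?thesis by (simp add: power_add mult_ac)
    qed
    show "poly_eval (pt s) f * \<omega> ^ (\<Sum>j\<in>{1..r}. s j * (q - d j)) = (\<Sum>M\<in>ks f. lk f M * \<omega> ^ wexp M * (\<Prod>j\<in>{1..r}. \<omega> ^ (s j * ?X M j)))"
      unfolding eval_pt[OF vf] sum_distrib_right e ..
  qed
  also have "\<dots> = (\<Sum>M\<in>ks f. lk f M * \<omega> ^ wexp M * (\<Sum>s\<in>?S. \<Prod>j\<in>{1..r}. \<omega> ^ (s j * ?X M j)))"
    by (subst sum.swap) (simp add: sum_distrib_left)
  also have "\<dots> = (\<Sum>M\<in>ks f. lk f M * \<omega> ^ wexp M * (if ?P M then of_nat q ^ r else 0))"
  proof (rule sum.cong[OF refl])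
    fix M
    have "(\<Sum>s\<in>?S. \<Prod>j\<in>{1..r}. \<omega> ^ (s j * ?X M j)) = (\<Prod>j\<in>{1..r}. \<Sum>b<q. \<omega> ^ (b * ?X M j))"
      by (rule prod_sum_PiE[symmetric]) auto
    also have "\<dots> = (\<Prod>j\<in>{1..r}. if EE M j mod q = d j then of_nat q else 0)"
      by (rule prod.cong[OF refl]) (use d in \<open>simp add: geom dvd_shift\<close>)
    also have "\<dots> = (if ?P M then of_nat q ^ r else 0)" by (simp add: prod_if_const)
    finally show "lk f M * \<omega> ^ wexp M * (\<Sum>s\<in>?S. \<Prod>j\<in>{1..r}. \<omega> ^ (s j * ?X M j)) =
        lk f M * \<omega> ^ wexp M * (if ?P M then of_nat q ^ r else 0)" by simp
  qed
  also have "\<dots> = of_nat q ^ r * (\<Sum>M\<in>ks f. if ?P M then lk f M * \<omega> ^ wexp M else 0)"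
    by (simp add: sum_distrib_left if_distrib mult_ac cong: if_cong)
  finally have "of_nat q ^ r * (\<Sum>M\<in>ks f. if ?P M then lk f M * \<omega> ^ wexp M else 0) = (0::complex)" by simp
  then show ?thesis using q_pos by simp
qed

lemma NF_zero: assumes "f \<in> vanishing_ideal {1..k+r} (Sol q \<omega> k r \<alpha> A)" shows "NF f = 0"
proof (rule poly_mapping_eqI)
  fix e
  have vf: "vars_in {1..k+r} f" and van: "\<forall>a\<in>Sol q \<omega> k r \<alpha> A. poly_eval a f = 0"
    using assms by (auto simp: vanishing_ideal_def)
  have "lk (NF f) e = (\<Sum>M\<in>ks f. if std M = e then lk f M * \<omega> ^ wexp M else 0)"
    unfolding NF_def by (simp add: lookup_sum lookup_single when_def)
  also have "\<dots> = 0"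
  proof (cases "\<exists>M0\<in>ks f. std M0 = e")
    case True
    then obtain M0 where M0: "std M0 = e" by blast
    define d where "d j = EE M0 j mod q" for j
    have d: "\<forall>j\<in>{1..r}. d j < q" using q_pos by (simp add: d_def)
    have iff: "(std M = e) = (\<forall>j\<in>{1..r}. EE M j mod q = d j)" for M
    proof
      assume "std M = e"
      show "\<forall>j\<in>{1..r}. EE M j mod q = d j"
      proof
        fix j assume j: "j \<in> {1..r}"
        have "lk (std M) (k+j) = lk (std M0) (k+j)" using M0 \<open>std M = e\<close> by simp
        then show "EE M j mod q = d j" unfolding std_def lk_ysum d_def using j by simp
      qed
    next
      assume h: "\<forall>j\<in>{1..r}. EE M j mod q = d j"
      have "std M = std M0"
      proof (rule poly_mapping_eqI)
        fix i
        show "lk (std M) i = lk (std M0) i"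
        proof (cases "k < i \<and> i \<le> k + r")
          case True
          then have "i - k \<in> {1..r}" by auto
          then show ?thesis using h True unfolding std_def lk_ysum d_def by simp
        next
          case False then show ?thesis unfolding std_def lk_ysum by auto
        qed
      qed
      then show "std M = e" using M0 by simp
    qed
    show ?thesis unfolding iff by (rule fourier[OF vf van d])
  next
    case False
    then show ?thesis by (intro sum.neutral) auto
  qed
  finally show "lk (NF f) e = lk 0 e" by simp
qed

lemma van_sub: assumes "f \<in> vanishing_ideal {1..k+r} (Sol q \<omega> k r \<alpha> A)" shows "f \<in> II"
proof -
  have "vars_in {1..k+r} f" using assms by (simp add: vanishing_ideal_def)
  from main_red[OF this] show ?thesis using NF_zero[OF assms] by simp
qed

end


lemma ks_sg: "ks (sg m c) \<subseteq> {m}" by simp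

lemma lex_gt_asym: assumes "lex_gt a b" shows "\<not> lex_gt b a"
proof
  assume "lex_gt b a"
  from assms obtain i where i: "lk b i < lk a i" "\<And>l. l < i \<Longrightarrow> lk a l = lk b l" unfolding lex_gt_def by blast
  from \<open>lex_gt b a\<close> obtain j where j: "lk a j < lk b j" "\<And>l. l < j \<Longrightarrow> lk b l = lk a l" unfolding lex_gt_def by blast
  show False
  proof (cases i j rule: linorder_cases)
    case less
    then have "lk b i = lk a i" using j(2) by simp
    then show False using i(1) by simp
  next
    case equal then show False using i(1) j(1) by simp
  next
    case greater
    then have "lk a j = lk b j" using i(2) by simp
    then show False using j(1) by simp
  qed
qed

lemma lex_gt_trans: assumes "lex_gt a b" "lex_gt b c" shows "lex_gt a c"
proof -
  from assms(1) obtain i where i: "lk b i < lk a i" "\<And>l. l < i \<Longrightarrow> lk a l = lk b l" unfolding lex_gt_def by blast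
  from assms(2) obtain j where j: "lk c j < lk b j" "\<And>l. l < j \<Longrightarrow> lk b l = lk c l" unfolding lex_gt_def by blast
  define m where "m = min i j"
  have below: "lk a l = lk c l" if "l < m" for l
  proof -
    have "lk a l = lk b l" using i(2) that by (simp add: m_def)
    also have "\<dots> = lk c l" using j(2) that by (simp add: m_def)
    finally show ?thesis .
  qed
  have at: "lk c m < lk a m"
  proof (cases i j rule: linorder_cases)
    case less
    then have "m = i" by (simp add: m_def)
    moreover have "lk b i = lk c i" using j(2) less by simp
    ultimately show ?thesis using i(1) by simp
  next
    case equal
    then have "m = i" "m = j" by (simp_all add: m_def)
    then show ?thesis using i(1) j(1) by simp
  next
    case greater
    then have "m = j" by (simp add: m_def)
    moreover have "lk a j = lk b j" using i(2) greater by simp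
    ultimately show ?thesis using j(1) by simp
  qed
  show ?thesis unfolding lex_gt_def using at below by blast
qed

lemma first_diff:
  fixes a b :: mon
  assumes "a \<noteq> b"
  obtains i where "lk a i \<noteq> lk b i" "\<forall>l<i. lk a l = lk b l"
proof -
  have ex: "\<exists>i. lk a i \<noteq> lk b i"
  proof (rule ccontr)
    assume "\<not> (\<exists>i. lk a i \<noteq> lk b i)"
    then have "a = b" by (intro poly_mapping_eqI) simp
    with assms show False by simp
  qed
  define i where "i = (LEAST i. lk a i \<noteq> lk b i)"
  have "lk a i \<noteq> lk b i" unfolding i_def by (rule LeastI_ex) (rule ex)
  moreover have "\<forall>l<i. lk a l = lk b l" unfolding i_def using not_less_Least by blast
  ultimately show ?thesis using that by blast
qed

lemma lex_gt_total: assumes "a \<noteq> b" shows "lex_gt a b \<or> lex_gt b a"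
proof -
  obtain i where i: "lk a i \<noteq> lk b i" "\<forall>l<i. lk a l = lk b l" using first_diff[OF assms] by blast
  show ?thesis
  proof (cases "lk b i < lk a i")
    case True then show ?thesis using i unfolding lex_gt_def by blast
  next
    case False
    then have "lk a i < lk b i" using i(1) by simp
    moreover have "\<forall>l<i. lk b l = lk a l" using i(2) by simp
    ultimately show ?thesis unfolding lex_gt_def by blast
  qed
qed

lemma lex_max: "finite S \<Longrightarrow> S \<noteq> {} \<Longrightarrow> \<exists>m\<in>S. \<forall>x\<in>S. x \<noteq> m \<longrightarrow> lex_gt m x"
proof (induction S rule: finite_ne_induct)
  case (singleton x) then show ?case by simp
next
  case (insert x F)
  then obtain m where m: "m \<in> F" "\<forall>y\<in>F. y \<noteq> m \<longrightarrow> lex_gt m y" by blast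
  have xm: "x \<noteq> m" using m(1) insert.hyps by blast
  show ?case
  proof (cases "lex_gt x m")
    case True
    have "\<forall>y\<in>insert x F. y \<noteq> x \<longrightarrow> lex_gt x y"
    proof (intro ballI impI)
      fix y assume "y \<in> insert x F" "y \<noteq> x"
      then have y: "y \<in> F" by simp
      show "lex_gt x y"
      proof (cases "y = m")
        case True then show ?thesis using \<open>lex_gt x m\<close> by simp
      next
        case False then show ?thesis using m(2) y lex_gt_trans[OF \<open>lex_gt x m\<close>] by blast
      qed
    qed
    then show ?thesis by (intro bexI[of _ x]) simp_all
  next
    case False
    then have "lex_gt m x" using lex_gt_total[OF xm] by blast
    then have "\<forall>y\<in>insert x F. y \<noteq> m \<longrightarrow> lex_gt m y" using m(2) by simp
    then show ?thesis using m(1) by (intro bexI[of _ m]) simp_all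
  qed
qed

lemma lead_term_eq: assumes "m \<in> ks p" "\<forall>x\<in>ks p. x \<noteq> m \<longrightarrow> lex_gt m x"
  shows "lead_term p = sg m (lk p m)"
proof -
  have "lead_mon p = m" unfolding lead_mon_def
  proof (rule the_equality)
    show "m \<in> ks p \<and> (\<forall>mo'\<in>ks p. mo' \<noteq> m \<longrightarrow> lex_gt m mo')" using assms by blast
  next
    fix m' assume h: "m' \<in> ks p \<and> (\<forall>mo'\<in>ks p. mo' \<noteq> m' \<longrightarrow> lex_gt m' mo')"
    show "m' = m"
    proof (rule ccontr)
      assume ne: "m' \<noteq> m"
      have "lex_gt m' m" using h assms(1) ne[symmetric] by blast
      moreover have "lex_gt m m'" using h assms(2) ne by blast
      ultimately
      show False using lex_gt_asym by blast
    qed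
  qed
  moreover have "p \<noteq> 0" using assms(1) by auto
  ultimately show ?thesis by (simp add: lead_term_def)
qed

context csp_setup
begin

lemma lt_cp: assumes t: "t \<in> {1..k}" shows "lead_term (constraint_poly \<omega> k r \<alpha> A t) = sg (sg t 1) 1"
proof -
  let ?p = "sg (sg t 1) 1 - sg (Yt t) (\<omega> ^ \<alpha> t)"
  have ne: "Yt t \<noteq> sg t 1"
  proof
    assume "Yt t = sg t 1"
    then have "lk (Yt t) t = lk (sg t (1::nat)) t" by simp
    then show False using t by (simp add: lk_Yt)
  qed
  have lkp: "lk ?p (sg t 1) = 1" using ne by (simp add: lookup_minus lookup_single when_def)
  have mem: "sg t 1 \<in> ks ?p" using lkp by (simp add: in_keys_iff)
  have gt: "lex_gt (sg t 1) (Yt t)" unfolding lex_gt_def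
  proof (intro exI[of _ t] conjI allI impI)
    show "lk (Yt t) t < lk (sg t 1) t" using t by (simp add: lk_Yt)
  next
    fix j assume "j < t"
    then show "lk (sg t 1) j = lk (Yt t) j" using t by (simp add: lk_Yt lookup_single when_def)
  qed
  have others: "\<forall>x\<in>ks ?p. x \<noteq> sg t 1 \<longrightarrow> lex_gt (sg t 1) x"
  proof (intro ballI impI)
    fix x assume "x \<in> ks ?p" "x \<noteq> sg t 1"
    moreover have "ks ?p \<subseteq> {sg t 1, Yt t}"
      using keys_diff[of "sg (sg t 1) 1" "sg (Yt t) (\<omega> ^ \<alpha> t)"] ks_sg[of "sg t 1" 1] ks_sg[of "Yt t" "\<omega> ^ \<alpha> t"] by blast
    ultimately have "x = Yt t" by blast
    then show "lex_gt (sg t 1) x" using gt by simp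
  qed
  show ?thesis unfolding cp_explicit using lead_term_eq[OF mem others] lkp by simp
qed

lemma lt_y: assumes j: "j \<in> {1..r}" shows "lead_term (Var (k+j) ^ q - 1) = sg (sg (k+j) q) 1"
proof -
  let ?p = "sg (sg (k+j) q) 1 - sg 0 1 :: mpoly"
  have ne: "sg (k+j) q \<noteq> 0"
  proof
    assume "sg (k+j) q = 0"
    then have "lk (sg (k+j) q) (k+j) = lk 0 (k+j)" by simp
    then show False using q_pos by simp
  qed
  have lkp: "lk ?p (sg (k+j) q) = 1" using ne by (simp add: lookup_minus lookup_single lookup_one when_def)
  have mem: "sg (k+j) q \<in> ks ?p" using lkp by (simp add: in_keys_iff)
  have gt: "lex_gt (sg (k+j) q) 0" unfolding lex_gt_def
  proof (intro exI[of _ "k+j"] conjI allI impI)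
    show "lk 0 (k+j) < lk (sg (k+j) q) (k+j)" using q_pos by simp
  next
    fix l assume "l < k + j"
    then show "lk (sg (k+j) q) l = lk 0 l" by (simp add: lookup_single when_def)
  qed
  have others: "\<forall>x\<in>ks ?p. x \<noteq> sg (k+j) q \<longrightarrow> lex_gt (sg (k+j) q) x"
  proof (intro ballI impI)
    fix x assume "x \<in> ks ?p" "x \<noteq> sg (k+j) q"
    moreover have "ks ?p \<subseteq> {sg (k+j) q, 0}"
      using keys_diff[of "sg (sg (k+j) q) 1" "sg 0 1 :: mpoly"] ks_sg[of "sg (k+j) q" "1::complex"] ks_sg[of "0::mon" "1::complex"] by blast
    ultimately have "x = 0" by blast
    then show "lex_gt (sg (k+j) q) x" using gt by simp
  qed
  show ?thesis unfolding ypoly_explicit using lead_term_eq[OF mem others] lkp by simp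
qed

lemma std_gt:
  assumes "ks M \<subseteq> {1..k+r}" "ks M0 \<subseteq> {1..k+r}" "\<forall>t\<in>{1..k}. lk M0 t = 0" "std M = M0" "M \<noteq> M0"
  shows "lex_gt M M0"
proof -
  obtain i where ne: "lk M i \<noteq> lk M0 i" and below: "\<forall>l<i. lk M l = lk M0 l"
    using first_diff[OF assms(5)] by blast
  have "lk M0 i < lk M i"
  proof (cases "i \<in> {1..k}")
    case True then show ?thesis using assms(3) ne by auto
  next
    case False
    show ?thesis
    proof (cases "k < i \<and> i \<le> k+r")
      case True
      define j where "j = i - k"
      have j: "j \<in> {1..r}" "i = k + j" using True by (auto simp: j_def)
      have x0: "\<forall>t\<in>{1..k}. lk M t = 0" using below assms(3) True by auto
      have "EE M j = lk M i" unfolding EE_def using x0 j by simp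
      moreover have "lk (std M) i = EE M j mod q" unfolding std_def lk_ysum using True j by simp
      ultimately have "lk M i mod q = lk M0 i" using assms(4) by simp
      moreover have "lk M i mod q \<le> lk M i" by (rule mod_less_eq_dividend)
      ultimately have "lk M0 i \<le> lk M i" by simp
      from le_neq_implies_less[OF this ne[symmetric]] show ?thesis .
    next
      case F2: False
      then have "i \<notin> {1..k+r}" using False by auto
      then have "i \<notin> ks M" "i \<notin> ks M0" using assms(1,2) by auto
      then show ?thesis using ne by (simp add: in_keys_iff)
    qed
  qed
  then show ?thesis unfolding lex_gt_def using below by blast
qed

lemma lead_in:
  assumes f: "f \<in> vanishing_ideal {1..k+r} (Sol q \<omega> k r \<alpha> A)" and f0: "f \<noteq> 0"
  shows "lead_term f \<in> gen_ideal {1..k+r} (lead_term ` GG)"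
proof -
  have vf: "vars_in {1..k+r} f" using f by (simp add: vanishing_ideal_def)
  have "ks f \<noteq> {}" using f0 by simp
  then obtain M0 where M0: "M0 \<in> ks f" "\<forall>x\<in>ks f. x \<noteq> M0 \<longrightarrow> lex_gt M0 x"
    using lex_max[of "ks f"] by auto
  have LT: "lead_term f = sg M0 (lk f M0)" by (rule lead_term_eq[OF M0])
  have ksM0: "ks M0 \<subseteq> {1..k+r}" using vf M0(1) by (simp add: vars_in_def)
  consider (x) t where "t \<in> {1..k}" "lk M0 t \<noteq> 0" | (y) j where "j \<in> {1..r}" "q \<le> lk M0 (k+j)"
    | (s) "\<forall>t\<in>{1..k}. lk M0 t = 0" "\<forall>j\<in>{1..r}. lk M0 (k+j) < q"
  proof -
    show ?thesis
    proof (cases "\<exists>t\<in>{1..k}. lk M0 t \<noteq> 0")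
      case True then show ?thesis using that(1) by blast
    next
      case F1: False
      show ?thesis
      proof (cases "\<exists>j\<in>{1..r}. q \<le> lk M0 (k+j)")
        case True then show ?thesis using that(2) by blast
      next
        case False
        have "\<forall>j\<in>{1..r}. lk M0 (k+j) < q" using False by (simp add: not_le)
        moreover have "\<forall>t\<in>{1..k}. lk M0 t = 0" using F1 by simp
        ultimately show ?thesis using that(3) by blast
      qed
    qed
  qed
  then show ?thesis
  proof cases
    case x
    define M1 where "M1 = M0 - sg t 1"
    have MM: "M0 = M1 + sg t 1"
      by (rule poly_mapping_eqI) (use x in \<open>auto simp: M1_def lookup_add lookup_minus lookup_single when_def\<close>)
    have eq: "lead_term f = sg M1 (lk f M0) * lead_term (constraint_poly \<omega> k r \<alpha> A t)"
      unfolding LT lt_cp[OF x(1)] mult_single by (simp) (metis MM One_nat_def)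
    have "ks M1 \<subseteq> ks M0" by (auto simp: M1_def in_keys_iff lookup_minus)
    then have v: "vars_in {1..k+r} (sg M1 (lk f M0))" using ksM0 by (intro vars_in_single) auto
    have "lead_term (constraint_poly \<omega> k r \<alpha> A t) \<in> lead_term ` GG" using cp_in[OF x(1)] by (rule imageI)
    then show ?thesis unfolding eq by (rule gi_mult[OF v gi_gen])
  next
    case y
    define M1 where "M1 = M0 - sg (k+j) q"
    have MM: "M0 = M1 + sg (k+j) q"
      by (rule poly_mapping_eqI) (use y in \<open>auto simp: M1_def lookup_add lookup_minus lookup_single when_def\<close>)
    have eq: "lead_term f = sg M1 (lk f M0) * lead_term (Var (k+j) ^ q - 1)"
      unfolding LT lt_y[OF y(1)] mult_single by (simp add: MM)
    have "ks M1 \<subseteq> ks M0" by (auto simp: M1_def in_keys_iff lookup_minus)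
    then have v: "vars_in {1..k+r} (sg M1 (lk f M0))" using ksM0 by (intro vars_in_single) auto
    have "lead_term (Var (k+j) ^ q - 1) \<in> lead_term ` GG" using yp_in[OF y(1)] by (rule imageI)
    then show ?thesis unfolding eq by (rule gi_mult[OF v gi_gen])
  next
    case s
    have stdM0: "std M0 = M0"
    proof (rule poly_mapping_eqI)
      fix i
      show "lk (std M0) i = lk M0 i"
      proof (cases "k < i \<and> i \<le> k + r")
        case True
        then have j: "i - k \<in> {1..r}" "k + (i - k) = i" by auto
        then have "lk M0 i < q" using s(2) by metis
        moreover have "EE M0 (i - k) = lk M0 i" unfolding EE_def using s(1) j by simp
        ultimately show ?thesis unfolding std_def lk_ysum using True by simp
      next
        case False
        have "lk M0 i = 0"
        proof (cases "i \<in> {1..k}")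
          case True then show ?thesis using s(1) by simp
        next
          case F2: False
          then have "i \<notin> ks M0" using ksM0 False by auto
          then show ?thesis by (simp add: in_keys_iff)
        qed
        then show ?thesis unfolding std_def lk_ysum using False by auto
      qed
    qed
    have w0: "wexp M0 = 0" using s(1) by (simp add: wexp_def)
    have "lk (NF f) M0 = 0" using NF_zero[OF f] by simp
    moreover have "lk (NF f) M0 = (\<Sum>M\<in>ks f. if std M = M0 then lk f M * \<omega> ^ wexp M else 0)"
      unfolding NF_def by (simp add: lookup_sum lookup_single when_def)
    moreover have "(\<Sum>M\<in>ks f. if std M = M0 then lk f M * \<omega> ^ wexp M else 0) = lk f M0"
    proof -
      have "(\<Sum>M\<in>ks f. if std M = M0 then lk f M * \<omega> ^ wexp M else 0) = (\<Sum>M\<in>ks f. if M = M0 then lk f M0 else 0)"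
      proof (rule sum.cong[OF refl])
        fix M assume M: "M \<in> ks f"
        show "(if std M = M0 then lk f M * \<omega> ^ wexp M else 0) = (if M = M0 then lk f M0 else 0)"
        proof (cases "M = M0")
          case True then show ?thesis using stdM0 w0 by simp
        next
          case False
          have "std M \<noteq> M0"
          proof
            assume "std M = M0"
            have ksM: "ks M \<subseteq> {1..k+r}" using vf M by (simp add: vars_in_def)
            have "lex_gt M M0" by (rule std_gt[OF ksM ksM0 s(1) \<open>std M = M0\<close> False])
            moreover have "lex_gt M0 M" using M0(2) M False by blast
            ultimately show False using lex_gt_asym by blast
          qed
          then show ?thesis using False by simp
        qed
      qed
      also have "\<dots> = lk f M0" using M0(1) by (subst sum.delta) auto
      finally show ?thesis .
    qed
    ultimately have "lk f M0 = 0" by simp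
    then show ?thesis using M0(1) by (simp add: in_keys_iff)
  qed
qed

end


theorem lemma5p4:
  fixes p m q k r :: nat and \<omega> :: complex and \<alpha> :: "nat \<Rightarrow> nat" and A :: "nat \<Rightarrow> nat \<Rightarrow> nat"
  assumes "prime p" and "m \<ge> 1" and "q = p ^ m"
    and "\<omega> ^ q = 1" and "\<forall>n. 0 < n \<and> n < q \<longrightarrow> \<omega> ^ n \<noteq> 1"
    and "\<forall>t\<in>{1..k}. \<alpha> t < q \<and> (\<forall>j\<in>{1..r}. A t j < q)"
  shows "CSP_ideal q \<omega> k r \<alpha> A = vanishing_ideal {1..k+r} (Sol q \<omega> k r \<alpha> A)
    \<and> is_groebner_basis {1..k+r} (G' q \<omega> k r \<alpha> A) (vanishing_ideal {1..k+r} (Sol q \<omega> k r \<alpha> A))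
    \<and> gen_ideal {1..k+r} (G' q \<omega> k r \<alpha> A) = vanishing_ideal {1..k+r} (Sol q \<omega> k r \<alpha> A)"
proof -
  have qpos: "q > 0" using assms(1,3) prime_gt_0_nat by simp
  interpret csp_setup q k r \<omega> \<alpha> A using qpos assms(4,5) by unfold_locales auto
  let ?V = "{1..k+r}"
  let ?S = "Sol q \<omega> k r \<alpha> A"
  let ?VI = "vanishing_ideal ?V ?S"
  have cp_props: "vars_in ?V (constraint_poly \<omega> k r \<alpha> A t) \<and> (\<forall>a\<in>?S. poly_eval a (constraint_poly \<omega> k r \<alpha> A t) = 0)"
    if t: "t \<in> {1..k}" for t
  proof
    have k1: "ks (sg t (1::nat)) \<subseteq> ?V" using t by simp
    have "{k+1..k+r} \<subseteq> ?V" by auto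
    with Yt_keys[of t] have k2: "ks (Yt t) \<subseteq> ?V" by (rule subset_trans)
    show "vars_in ?V (constraint_poly \<omega> k r \<alpha> A t)" unfolding cp_explicit
      by (intro vars_in_diff vars_in_single k1 k2)
    show "\<forall>a\<in>?S. poly_eval a (constraint_poly \<omega> k r \<alpha> A t) = 0"
    proof
      fix a assume "a \<in> ?S"
      then have "a t = \<omega> ^ \<alpha> t * (\<Prod>j\<in>{1..r}. a (k + j) ^ A t j)" using t by (simp add: Sol_def)
      then show "poly_eval a (constraint_poly \<omega> k r \<alpha> A t) = 0"
        unfolding constraint_poly_def by (simp add: eval_diff eval_mult eval_prod eval_power)
    qed
  qed
  have yp_props: "vars_in ?V (Var i ^ q - 1) \<and> (\<forall>a\<in>?S. poly_eval a (Var i ^ q - 1) = 0)"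
    if i: "i \<in> ?V" for i
  proof
    have k1: "ks (sg i q) \<subseteq> ?V" using i by simp
    show "vars_in ?V (Var i ^ q - 1)" unfolding ypoly_explicit
      by (intro vars_in_diff vars_in_single k1) simp
    show "\<forall>a\<in>?S. poly_eval a (Var i ^ q - 1) = 0"
    proof
      fix a assume "a \<in> ?S"
      then have "a i ^ q = 1" using i by (simp add: Sol_def roots_of_unity_def)
      then show "poly_eval a (Var i ^ q - 1) = 0" by (simp add: eval_diff eval_power)
    qed
  qed
  have G_props: "vars_in ?V g \<and> (\<forall>a\<in>?S. poly_eval a g = 0)" if "g \<in> GG" for g
  proof -
    from that consider (c) t where "t \<in> {1..k}" "g = constraint_poly \<omega> k r \<alpha> A t"
      | (y) j where "j \<in> {1..r}" "g = Var (k+j) ^ q - 1"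
      unfolding G'_def by blast
    then show ?thesis
    proof cases
      case c then show ?thesis using cp_props by simp
    next
      case y
      then have "k + j \<in> ?V" by simp
      then show ?thesis using yp_props y(2) by simp
    qed
  qed
  have II_sub: "II \<subseteq> ?VI" by (rule gi_vanish) (rule G_props)
  have VI_sub: "?VI \<subseteq> II" using van_sub by blast
  have eq1: "II = ?VI" using II_sub VI_sub by (rule subset_antisym)
  have GG_II: "GG \<subseteq> II" using gi_gen by blast
  have CSP_eq: "CSP_ideal q \<omega> k r \<alpha> A = ?VI"
  proof
    show "CSP_ideal q \<omega> k r \<alpha> A \<subseteq> ?VI" unfolding CSP_ideal_def
    proof (rule gi_vanish)
      fix g assume "g \<in> (\<lambda>i. Var i ^ q - 1) ` ?V \<union> constraint_poly \<omega> k r \<alpha> A ` {1..k}"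
      then show "vars_in ?V g \<and> (\<forall>a\<in>?S. poly_eval a g = 0)" using cp_props yp_props by blast
    qed
  next
    have "GG \<subseteq> CSP_ideal q \<omega> k r \<alpha> A"
    proof
      fix g assume "g \<in> GG"
      then have "g \<in> (\<lambda>i. Var i ^ q - 1) ` ?V \<union> constraint_poly \<omega> k r \<alpha> A ` {1..k}"
        unfolding G'_def by force
      then show "g \<in> CSP_ideal q \<omega> k r \<alpha> A" unfolding CSP_ideal_def by (rule gi_gen)
    qed
    then have "II \<subseteq> CSP_ideal q \<omega> k r \<alpha> A" unfolding CSP_ideal_def by (rule gi_mono)
    then show "?VI \<subseteq> CSP_ideal q \<omega> k r \<alpha> A" using eq1 by simp
  qed
  have GB: "is_groebner_basis ?V GG ?VI"
    unfolding is_groebner_basis_def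
  proof (intro conjI)
    show "finite GG" unfolding G'_def by simp
    show "GG \<subseteq> ?VI" using GG_II eq1 by simp
    show "gen_ideal ?V (lead_term ` GG) = gen_ideal ?V (lead_term ` ?VI)"
    proof
      show "gen_ideal ?V (lead_term ` GG) \<subseteq> gen_ideal ?V (lead_term ` ?VI)"
      proof (rule gi_mono)
        have "lead_term ` GG \<subseteq> lead_term ` ?VI" using GG_II eq1 by auto
        then show "lead_term ` GG \<subseteq> gen_ideal ?V (lead_term ` ?VI)" using gi_gen by blast
      qed
    next
      show "gen_ideal ?V (lead_term ` ?VI) \<subseteq> gen_ideal ?V (lead_term ` GG)"
      proof (rule gi_mono, rule subsetI)
        fix x assume "x \<in> lead_term ` ?VI"
        then obtain f where f: "f \<in> ?VI" "x = lead_term f" by blast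
        show "x \<in> gen_ideal ?V (lead_term ` GG)"
        proof (cases "f = 0")
          case True then show ?thesis using f(2) by (simp add: lead_term_def gi_zero)
        next
          case False then show ?thesis using f lead_in by simp
        qed
      qed
    qed
  qed
  show ?thesis using CSP_eq GB eq1 by simp
qed

end
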